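(* Let $\tau$ be a finite topology on $X$ and let $H=G_1(\tau)$. If distinct $u,v\in X$ are $T_i$-adjacent for some $i\in\{1,2,3',3'',4\}$, then $\mathrm{dist}_H(u,v)\le i$, where $3'$ and $3''$ are read as $3$.
   Context: A finite topology $\tau$ on a finite set $X$ is a family of subsets containing $\emptyset,X$ and closed under unions and intersections. For $A\subseteq X$, $m_\tau(A)$ is the intersection of all open sets containing $A$, $m_\tau(x)=m_\tau(\{x\})$; $\ell_\tau(x)=X\setminus\bigcup\{U\in\tau:x\notin U\}$ and $m_\tau(\ell(x))=m_\tau(\ell_\tau(x))$. Distinct $x,y$ are $T_1$-adjacent if $m_\tau(x)\subseteq m_\tau(y)$ or $m_\tau(y)\subseteq m_\tau(x)$; $T_2$-adjacent if $m_\tau(x)\cap m_\tau(y)\ne\emptyset$; $T_{3'}$-adjacent if $m_\tau(x)\cap m_\tau(\ell(y))\ne\emptyset$ and $m_\tau(\ell(x))\cap m_\tau(y)\ne\emptyset$; $T_{3''}$-adjacent if the same with "or"; $T_4$-adjacent if $m_\tau(\ell(x))\cap m_\tau(\ell(y))\ne\emptyset$. $G_1(\tau)$ is the simple graph on $X$ in which distinct $x,y$ are adjacent iff they are $T_1$-adjacent. $\mathrm{dist}_H$ is graph distance in $H$. *)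

theory Defs
  imports Main "HOL-Library.Extended_Nat"
begin

definition finite_topology :: "'a set \<Rightarrow> 'a set set \<Rightarrow> bool" where
  "finite_topology X \<tau> \<longleftrightarrow> finite X \<and> \<tau> \<subseteq> Pow X \<and> {} \<in> \<tau> \<and> X \<in> \<tau> \<and>
     (\<forall>U\<in>\<tau>. \<forall>V\<in>\<tau>. U \<union> V \<in> \<tau>) \<and> (\<forall>U\<in>\<tau>. \<forall>V\<in>\<tau>. U \<inter> V \<in> \<tau>)"

definition mset :: "'a set set \<Rightarrow> 'a set \<Rightarrow> 'a set" where
  "mset \<tau> A = \<Inter> {U \<in> \<tau>. A \<subseteq> U}"

abbreviation mpt :: "'a set set \<Rightarrow> 'a \<Rightarrow> 'a set" where
  "mpt \<tau> x \<equiv> mset \<tau> {x}"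

definition ell :: "'a set \<Rightarrow> 'a set set \<Rightarrow> 'a \<Rightarrow> 'a set" where
  "ell X \<tau> x = X - \<Union> {U \<in> \<tau>. x \<notin> U}"

definition T1_adj :: "'a set set \<Rightarrow> 'a \<Rightarrow> 'a \<Rightarrow> bool" where
  "T1_adj \<tau> x y \<longleftrightarrow> x \<noteq> y \<and> (mpt \<tau> x \<subseteq> mpt \<tau> y \<or> mpt \<tau> y \<subseteq> mpt \<tau> x)"

definition T2_adj :: "'a set set \<Rightarrow> 'a \<Rightarrow> 'a \<Rightarrow> bool" where
  "T2_adj \<tau> x y \<longleftrightarrow> x \<noteq> y \<and> mpt \<tau> x \<inter> mpt \<tau> y \<noteq> {}"

definition T3'_adj :: "'a set \<Rightarrow> 'a set set \<Rightarrow> 'a \<Rightarrow> 'a \<Rightarrow> bool" where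
  "T3'_adj X \<tau> x y \<longleftrightarrow> x \<noteq> y \<and>
     mpt \<tau> x \<inter> mset \<tau> (ell X \<tau> y) \<noteq> {} \<and> mset \<tau> (ell X \<tau> x) \<inter> mpt \<tau> y \<noteq> {}"

definition T3''_adj :: "'a set \<Rightarrow> 'a set set \<Rightarrow> 'a \<Rightarrow> 'a \<Rightarrow> bool" where
  "T3''_adj X \<tau> x y \<longleftrightarrow> x \<noteq> y \<and>
     (mpt \<tau> x \<inter> mset \<tau> (ell X \<tau> y) \<noteq> {} \<or> mset \<tau> (ell X \<tau> x) \<inter> mpt \<tau> y \<noteq> {})"

definition T4_adj :: "'a set \<Rightarrow> 'a set set \<Rightarrow> 'a \<Rightarrow> 'a \<Rightarrow> bool" where
  "T4_adj X \<tau> x y \<longleftrightarrow> x \<noteq> y \<and> mset \<tau> (ell X \<tau> x) \<inter> mset \<tau> (ell X \<tau> y) \<noteq> {}"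

definition G1_edge :: "'a set \<Rightarrow> 'a set set \<Rightarrow> 'a \<Rightarrow> 'a \<Rightarrow> bool" where
  "G1_edge X \<tau> x y \<longleftrightarrow> x \<in> X \<and> y \<in> X \<and> T1_adj \<tau> x y"

definition is_walk :: "'a set \<Rightarrow> ('a \<Rightarrow> 'a \<Rightarrow> bool) \<Rightarrow> 'a list \<Rightarrow> bool" where
  "is_walk V E p \<longleftrightarrow> p \<noteq> [] \<and> set p \<subseteq> V \<and> (\<forall>i. Suc i < length p \<longrightarrow> E (p ! i) (p ! Suc i))"

text \<open>Graph distance (infinity if no walk exists).\<close>
definition gdist :: "'a set \<Rightarrow> ('a \<Rightarrow> 'a \<Rightarrow> bool) \<Rightarrow> 'a \<Rightarrow> 'a \<Rightarrow> enat" where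
  "gdist V E u v = Inf {enat (length p - 1) | p. is_walk V E p \<and> hd p = u \<and> last p = v}"

end

theory Submission
  imports Defs
begin

lemma ft_Inter:
  assumes ft: "finite_topology X \<tau>" and "finite F" "F \<noteq> {}" "F \<subseteq> \<tau>"
  shows "\<Inter>F \<in> \<tau>"
  using assms(2-4)
proof (induction F rule: finite_ne_induct)
  case (singleton x) then show ?case by simp
next
  case (insert x F) then show ?case using ft unfolding finite_topology_def by auto
qed

lemma ft_Union:
  assumes ft: "finite_topology X \<tau>" and "finite F" "F \<subseteq> \<tau>"
  shows "\<Union>F \<in> \<tau>"
  using assms(2-3)
proof (induction F rule: finite_induct)
  case empty then show ?case using ft unfolding finite_topology_def by auto
next
  case (insert x F) then show ?case using ft unfolding finite_topology_def by auto
qed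

lemma tau_finite: "finite_topology X \<tau> \<Longrightarrow> finite \<tau>"
  unfolding finite_topology_def by (meson finite_Pow_iff finite_subset)

lemma mset_open:
  assumes ft: "finite_topology X \<tau>" and "A \<subseteq> X"
  shows "mset \<tau> A \<in> \<tau>"
  unfolding mset_def
  apply (rule ft_Inter[OF ft])
  using tau_finite[OF ft] assms unfolding finite_topology_def by auto

lemma mset_sub: "A \<subseteq> mset \<tau> A"
  unfolding mset_def by auto

lemma mset_least: "U \<in> \<tau> \<Longrightarrow> A \<subseteq> U \<Longrightarrow> mset \<tau> A \<subseteq> U"
  unfolding mset_def by auto

lemma mset_X: "finite_topology X \<tau> \<Longrightarrow> A \<subseteq> X \<Longrightarrow> mset \<tau> A \<subseteq> X"
  by (rule mset_least) (auto simp: finite_topology_def)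

lemma mpt_mono:
  assumes ft: "finite_topology X \<tau>" and "x \<in> X" and "y \<in> mpt \<tau> x"
  shows "mpt \<tau> y \<subseteq> mpt \<tau> x"
  using assms mset_open[OF ft, of "{x}"] by (intro mset_least) auto

lemma ell_sub: "ell X \<tau> v \<subseteq> X" unfolding ell_def by auto

lemma ell_prop:
  assumes ft: "finite_topology X \<tau>" and "w \<in> ell X \<tau> v"
  shows "v \<in> mpt \<tau> w"
proof -
  have wX: "w \<in> X" using assms(2) ell_sub[of X \<tau> v] by blast
  have "mpt \<tau> w \<in> \<tau>" using mset_open[OF ft] wX by auto
  moreover have "w \<in> mpt \<tau> w" using mset_sub[of "{w}" \<tau>] by auto
  ultimately show ?thesis using assms(2) unfolding ell_def by auto
qed

lemma mset_ell:
  assumes ft: "finite_topology X \<tau>" and "z \<in> mset \<tau> (ell X \<tau> v)"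
  shows "\<exists>w\<in>ell X \<tau> v. z \<in> mpt \<tau> w"
proof (rule ccontr)
  assume H: "\<not> ?thesis"
  let ?U = "\<Union>((\<lambda>w. mpt \<tau> w) ` ell X \<tau> v)"
  have fin: "finite (ell X \<tau> v)" using ft ell_sub unfolding finite_topology_def
    by (meson finite_subset)
  have "?U \<in> \<tau>"
    apply (rule ft_Union[OF ft])
    using fin mset_open[OF ft] ell_sub[of X \<tau> v] by auto
  moreover have "ell X \<tau> v \<subseteq> ?U"
  proof
    fix w assume "w \<in> ell X \<tau> v"
    moreover have "w \<in> mpt \<tau> w" using mset_sub[of "{w}" \<tau>] by simp
    ultimately show "w \<in> ?U" by (rule UN_I)
  qed
  ultimately have "mset \<tau> (ell X \<tau> v) \<subseteq> ?U" by (rule mset_least)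
  then have "z \<in> ?U" using assms(2) by (rule subsetD)
  then obtain w where "w \<in> ell X \<tau> v" "z \<in> mpt \<tau> w" by (rule UN_E)
  then show False using H by (rule_tac notE[OF H]) (rule bexI)
qed

definition reach :: "'a set \<Rightarrow> ('a \<Rightarrow> 'a \<Rightarrow> bool) \<Rightarrow> nat \<Rightarrow> 'a \<Rightarrow> 'a \<Rightarrow> bool" where
  "reach V E n u v \<longleftrightarrow> (\<exists>p. is_walk V E p \<and> hd p = u \<and> last p = v \<and> length p \<le> Suc n)"

lemma reach_gdist: "reach V E n u v \<Longrightarrow> gdist V E u v \<le> enat n"
  unfolding reach_def gdist_def
  apply clarify
  apply (rule order_trans[OF Inf_lower])
   apply blast
  by simp

lemma reach0: "u \<in> V \<Longrightarrow> reach V E 0 u u"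
  unfolding reach_def is_walk_def by (rule exI[of _ "[u]"]) auto

lemma reach_step:
  assumes "reach V E n u w" "w = v \<or> (v \<in> V \<and> E w v)"
  shows "reach V E (Suc n) u v"
proof -
  obtain p where p: "is_walk V E p" "hd p = u" "last p = w" "length p \<le> Suc n"
    using assms(1) unfolding reach_def by blast
  show ?thesis
  proof (cases "w = v")
    case True then show ?thesis using p unfolding reach_def by auto
  next
    case False
    then have v: "v \<in> V" "E w v" using assms(2) by auto
    have "is_walk V E (p @ [v])"
      unfolding is_walk_def
    proof (intro conjI allI impI)
      show "p @ [v] \<noteq> []" by simp
      show "set (p @ [v]) \<subseteq> V" using p(1) v unfolding is_walk_def by auto
      fix i assume i: "Suc i < length (p @ [v])"
      show "E ((p @ [v]) ! i) ((p @ [v]) ! Suc i)"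
      proof (cases "Suc i < length p")
        case True then show ?thesis using p(1) unfolding is_walk_def by (simp add: nth_append)
      next
        case False
        then have "Suc i = length p" using i by simp
        moreover have "p \<noteq> []" using p(1) unfolding is_walk_def by simp
        ultimately have pi: "p ! i = w" using p(3) by (metis diff_Suc_1 last_conv_nth)
        have "(p @ [v]) ! i = w" using pi \<open>Suc i = length p\<close> by (simp add: nth_append)
        moreover have "(p @ [v]) ! Suc i = v" using \<open>Suc i = length p\<close> by simp
        ultimately show ?thesis using v by simp
      qed
    qed
    moreover have "hd (p @ [v]) = u" using p(1,2) unfolding is_walk_def by simp
    ultimately show ?thesis unfolding reach_def using p(4) by (intro exI[of _ "p@[v]"]) auto
  qed
qed

lemma step_ok:
  assumes "a \<in> X" "b \<in> X" "mpt \<tau> a \<subseteq> mpt \<tau> b \<or> mpt \<tau> b \<subseteq> mpt \<tau> a"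
  shows "a = b \<or> (b \<in> X \<and> G1_edge X \<tau> a b)"
  using assms unfolding G1_edge_def T1_adj_def by auto

theorem lemma4p2:
  fixes X :: "'a set" and \<tau> :: "'a set set" and u v :: 'a
  assumes "finite_topology X \<tau>" and "u \<in> X" and "v \<in> X" and "u \<noteq> v"
  shows "(T1_adj \<tau> u v \<longrightarrow> gdist X (G1_edge X \<tau>) u v \<le> 1) \<and>
         (T2_adj \<tau> u v \<longrightarrow> gdist X (G1_edge X \<tau>) u v \<le> 2) \<and>
         (T3'_adj X \<tau> u v \<longrightarrow> gdist X (G1_edge X \<tau>) u v \<le> 3) \<and>
         (T3''_adj X \<tau> u v \<longrightarrow> gdist X (G1_edge X \<tau>) u v \<le> 3) \<and>
         (T4_adj X \<tau> u v \<longrightarrow> gdist X (G1_edge X \<tau>) u v \<le> 4)"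
proof -
  note ft = assms(1)
  let ?E = "G1_edge X \<tau>"
  have mX: "\<And>x. x \<in> X \<Longrightarrow> mpt \<tau> x \<subseteq> X" using mset_X[OF ft] by auto
  have ellX: "\<And>x. mset \<tau> (ell X \<tau> x) \<subseteq> X" by (rule mset_X[OF ft ell_sub])
  have ellm: "\<And>w x. w \<in> ell X \<tau> x \<Longrightarrow> mpt \<tau> x \<subseteq> mpt \<tau> w"
  proof -
    fix w x assume w: "w \<in> ell X \<tau> x"
    have "w \<in> X" using w ell_sub[of X \<tau> x] by blast
    then show "mpt \<tau> x \<subseteq> mpt \<tau> w" using mpt_mono[OF ft _ ell_prop[OF ft w]] by blast
  qed
  have st: "\<And>a b n. reach X ?E n u a \<Longrightarrow> b \<in> X \<Longrightarrow>
      mpt \<tau> a \<subseteq> mpt \<tau> b \<or> mpt \<tau> b \<subseteq> mpt \<tau> a \<Longrightarrow> reach X ?E (Suc n) u b"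
  proof -
    fix a b n assume r: "reach X ?E n u a" and b: "b \<in> X" and c: "mpt \<tau> a \<subseteq> mpt \<tau> b \<or> mpt \<tau> b \<subseteq> mpt \<tau> a"
    obtain p where p: "is_walk X ?E p" "last p = a" using r unfolding reach_def by blast
    have "last p \<in> set p" using p(1) unfolding is_walk_def by simp
    then have "a \<in> X" using p unfolding is_walk_def by blast
    then show "reach X ?E (Suc n) u b" using reach_step[OF r step_ok[OF _ b c]] by blast
  qed
  have r0: "reach X ?E 0 u u" using reach0 assms(2) .
  have g1: "gdist X ?E u v \<le> enat m" if "reach X ?E n u v" "n \<le> m" for m n
  proof -
    have "gdist X ?E u v \<le> enat n" using reach_gdist[OF that(1)] .
    also have "enat n \<le> enat m" using that(2) by simp
    finally show ?thesis .
  qed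
  have gn: "gdist X ?E u v \<le> of_nat n" if "reach X ?E n u v" for n
    using reach_gdist[OF that] by (simp add: of_nat_eq_enat)
  have A: "T1_adj \<tau> u v \<longrightarrow> gdist X ?E u v \<le> 1"
  proof
    assume H: "T1_adj \<tau> u v"
    have "reach X ?E (Suc 0) u v"
      by (rule st[OF r0 assms(3)]) (use H in \<open>simp add: T1_adj_def\<close>)
    from gn[OF this] show "gdist X ?E u v \<le> 1" by simp
  qed
  have B: "T2_adj \<tau> u v \<longrightarrow> gdist X ?E u v \<le> 2"
  proof
    assume "T2_adj \<tau> u v"
    then obtain z where z: "z \<in> mpt \<tau> u" "z \<in> mpt \<tau> v" unfolding T2_adj_def by auto
    have zX: "z \<in> X" using z mX assms by auto
    have r1: "reach X ?E (Suc 0) u z"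
      by (rule st[OF r0 zX]) (use mpt_mono[OF ft assms(2) z(1)] in blast)
    have "reach X ?E (Suc (Suc 0)) u v"
      by (rule st[OF r1 assms(3)]) (use mpt_mono[OF ft assms(3) z(2)] in blast)
    from gn[OF this] show "gdist X ?E u v \<le> 2" by simp
  qed
  have C3: "gdist X ?E u v \<le> 3" if H: "mpt \<tau> u \<inter> mset \<tau> (ell X \<tau> v) \<noteq> {} \<or> mset \<tau> (ell X \<tau> u) \<inter> mpt \<tau> v \<noteq> {}"
  proof -
    have "reach X ?E (Suc (Suc (Suc 0))) u v"
    proof (cases "mpt \<tau> u \<inter> mset \<tau> (ell X \<tau> v) \<noteq> {}")
      case True
      then obtain z where z: "z \<in> mpt \<tau> u" "z \<in> mset \<tau> (ell X \<tau> v)" by blast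
      obtain w where w: "w \<in> ell X \<tau> v" "z \<in> mpt \<tau> w" using mset_ell[OF ft z(2)] by blast
      have zX: "z \<in> X" using z(1) mX[OF assms(2)] by blast
      have wX: "w \<in> X" by (rule subsetD[OF ell_sub w(1)])
      have r1: "reach X ?E (Suc 0) u z"
        by (rule st[OF r0 zX]) (use mpt_mono[OF ft assms(2) z(1)] in blast)
      have r2: "reach X ?E (Suc (Suc 0)) u w"
        by (rule st[OF r1 wX]) (use mpt_mono[OF ft wX w(2)] in blast)
      show ?thesis
        by (rule st[OF r2 assms(3)]) (use ellm[OF w(1)] in blast)
    next
      case False
      then have "mset \<tau> (ell X \<tau> u) \<inter> mpt \<tau> v \<noteq> {}" using H by blast
      then obtain z where z: "z \<in> mpt \<tau> v" "z \<in> mset \<tau> (ell X \<tau> u)" by blast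
      obtain w where w: "w \<in> ell X \<tau> u" "z \<in> mpt \<tau> w" using mset_ell[OF ft z(2)] by blast
      have zX: "z \<in> X" using z(1) mX[OF assms(3)] by blast
      have wX: "w \<in> X" by (rule subsetD[OF ell_sub w(1)])
      have r1: "reach X ?E (Suc 0) u w"
        by (rule st[OF r0 wX]) (use ellm[OF w(1)] in blast)
      have r2: "reach X ?E (Suc (Suc 0)) u z"
        by (rule st[OF r1 zX]) (use mpt_mono[OF ft wX w(2)] in blast)
      show ?thesis
        by (rule st[OF r2 assms(3)]) (use mpt_mono[OF ft assms(3) z(1)] in blast)
    qed
    from gn[OF this] show ?thesis by (simp add: numeral_3_eq_3)
  qed
  have D: "T4_adj X \<tau> u v \<longrightarrow> gdist X ?E u v \<le> 4"
  proof
    assume "T4_adj X \<tau> u v"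
    then obtain z where z: "z \<in> mset \<tau> (ell X \<tau> u)" "z \<in> mset \<tau> (ell X \<tau> v)" unfolding T4_adj_def by auto
    obtain w1 where w1: "w1 \<in> ell X \<tau> u" "z \<in> mpt \<tau> w1" using mset_ell[OF ft z(1)] by blast
    obtain w2 where w2: "w2 \<in> ell X \<tau> v" "z \<in> mpt \<tau> w2" using mset_ell[OF ft z(2)] by blast
    have zX: "z \<in> X" using z(1) ellX by blast
    have w1X: "w1 \<in> X" by (rule subsetD[OF ell_sub w1(1)])
    have w2X: "w2 \<in> X" by (rule subsetD[OF ell_sub w2(1)])
    have r1: "reach X ?E (Suc 0) u w1"
      by (rule st[OF r0 w1X]) (use ellm[OF w1(1)] in blast)
    have r2: "reach X ?E (Suc (Suc 0)) u z"
      by (rule st[OF r1 zX]) (use mpt_mono[OF ft w1X w1(2)] in blast)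
    have r3: "reach X ?E (Suc (Suc (Suc 0))) u w2"
      by (rule st[OF r2 w2X]) (use mpt_mono[OF ft w2X w2(2)] in blast)
    have "reach X ?E (Suc (Suc (Suc (Suc 0)))) u v"
      by (rule st[OF r3 assms(3)]) (use ellm[OF w2(1)] in blast)
    from gn[OF this] show "gdist X ?E u v \<le> 4" by simp
  qed
  show ?thesis using A B C3 D unfolding T3'_adj_def T3''_adj_def by blast
qed

end
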